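(* Let $G$ be a discrete group, $\mathfrak g$ a finite string of elements of $G$, $\mathcal E$ a finite partition of $G$, and $\ell=|Con(\mathfrak g,\mathcal E)|$. Suppose $(B-A)X=0$ is a normal subsystem of $Eq(\mathfrak g,\mathcal E)$ consisting of $p$ equations (so $A,B$ are $p\times\ell$ $(0,1)$-matrices with rows $A_t,B_t$), and suppose that $\sum_{t=1}^p(B_t-A_t)=(1,1,\dots,1)$, i.e. $\alpha_C=1$ for every configuration $C$, where $(\alpha_C)_{C}=\sum_t(B_t-A_t)$. Then the Tarski number satisfies $\tau(G)\le(\ell-1)(2^p-1)$.
   Context: Configurations: for $\mathfrak g=(g_1,\dots,g_n)$ and a partition $\mathcal E=\{E_1,\dots,E_m\}$ of $G$, a configuration is $C=(c_0,\dots,c_n)\in\{1,\dots,m\}^{n+1}$ such that some $x\in G$ has $x\in E_{c_0}$ and $g_ix\in E_{c_i}$ ($1\le i\le n$); $Con(\mathfrak g,\mathcal E)$ is the set of configurations. The configuration equations $Eq(\mathfrak g,\mathcal E)$: variables $f_C$, equations $\sum_{C:\,c_j=i}f_C=\sum_{C:\,c_k=i}f_C$ for $1\le i\le m$, $0\le j,k\le n$, each written $aX=bX$ with $a,b\in\{0,1\}^\ell$ indicator vectors. A subsystem is a finite list (repetitions allowed, sides may be interchanged) of these equations $A_tX=B_tX$, written $(B-A)X=0$. Normality: with $\sum_t(B_t-A_t)$ strictly positive, $T$ the $p\times p$ lower triangular all-ones matrix, and for a permutation matrix $P$ with rows $P_1,\dots,P_p$, $P^+$ the matrix with rows $P_2,\dots,P_p,P_1$,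 the system is normal if for some permutation matrix $P$ all entries of $TP(B-A)-P^+A$ are integers $\ge-1$. Tarski number: a complete paradoxical decomposition of $G$ is a partition $\{A_1,\dots,A_r,B_1,\dots,B_s\}$ of $G$ together with $a_i,b_j\in G$ such that $\{a_iA_i\}_{i=1}^r$ and $\{b_jB_j\}_{j=1}^s$ are each partitions of $G$; $\tau(G)$ is the minimum of $r+s$ over all such decompositions ($\infty$ if none exists). *)

theory Defs
  imports "HOL-Algebra.Group" "HOL-Algebra.Coset" "HOL-Library.Extended_Nat"
begin

definition is_partition :: "('a, 'b) monoid_scheme \<Rightarrow> 'i set \<Rightarrow> ('i \<Rightarrow> 'a set) \<Rightarrow> bool" where
  "is_partition G I F \<longleftrightarrow>
     (\<forall>i\<in>I. F i \<noteq> {} \<and> F i \<subseteq> carrier G) \<and>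
     (\<forall>i\<in>I. \<forall>j\<in>I. i \<noteq> j \<longrightarrow> F i \<inter> F j = {}) \<and>
     (\<Union>i\<in>I. F i) = carrier G"

text \<open>Configurations of the string gs = (g_1,...,g_n) w.r.t. the partition E_0,...,E_{m-1}
  (block labels are 0-based; C ! 0 plays the role of c_0).\<close>
definition configurations ::
  "('a, 'b) monoid_scheme \<Rightarrow> 'a list \<Rightarrow> nat \<Rightarrow> (nat \<Rightarrow> 'a set) \<Rightarrow> nat list set" where
  "configurations G gs m E =
     {C. length C = Suc (length gs) \<and> (\<forall>c\<in>set C. c < m) \<and>
         (\<exists>x\<in>carrier G. x \<in> E (C ! 0) \<and>
            (\<forall>i<length gs. gs ! i \<otimes>\<^bsub>G\<^esub> x \<in> E (C ! Suc i)))}"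

text \<open>A subsystem of the configuration equations is a list of triples (i,j,k), standing for
  the equation  sum_{C: c_j = i} f_C = sum_{C: c_k = i} f_C, i.e. a X = b X with
  a = indicator of {C. c_j = i} and b = indicator of {C. c_k = i}.\<close>
definition eqA :: "(nat \<times> nat \<times> nat) list \<Rightarrow> nat \<Rightarrow> nat list \<Rightarrow> int" where
  "eqA eqs t C = (case eqs ! t of (i, j, k) \<Rightarrow> if C ! j = i then 1 else 0)"

definition eqB :: "(nat \<times> nat \<times> nat) list \<Rightarrow> nat \<Rightarrow> nat list \<Rightarrow> int" where
  "eqB eqs t C = (case eqs ! t of (i, j, k) \<Rightarrow> if C ! k = i then 1 else 0)"

text \<open>A permutation matrix P is given by a bijection \<sigma> of {0..<p}: row r of P is e_{\<sigma> r},
  so row r of P M is row \<sigma> r of M. T (lower triangular all ones) gives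
  (T N)_r = sum_{s \<le> r} N_s, and P^+ has rows P_2,...,P_p,P_1, so
  (P^+ A)_r = A_{\<sigma>((r+1) mod p)}.\<close>
definition normal_system ::
  "nat \<Rightarrow> 'c set \<Rightarrow> (nat \<Rightarrow> 'c \<Rightarrow> int) \<Rightarrow> (nat \<Rightarrow> 'c \<Rightarrow> int) \<Rightarrow> bool" where
  "normal_system p Con A B \<longleftrightarrow>
     (\<forall>C\<in>Con. (\<Sum>t<p. B t C - A t C) > 0) \<and>
     (\<exists>\<sigma>. bij_betw \<sigma> {..<p} {..<p} \<and>
        (\<forall>r<p. \<forall>C\<in>Con.
           (\<Sum>s\<le>r. B (\<sigma> s) C - A (\<sigma> s) C) - A (\<sigma> (Suc r mod p)) C \<ge> -1))"

definition complete_paradoxical ::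
  "('a, 'b) monoid_scheme \<Rightarrow> nat \<Rightarrow> nat \<Rightarrow> (nat \<Rightarrow> 'a set) \<Rightarrow> (nat \<Rightarrow> 'a)
     \<Rightarrow> (nat \<Rightarrow> 'a set) \<Rightarrow> (nat \<Rightarrow> 'a) \<Rightarrow> bool" where
  "complete_paradoxical G r s A a B b \<longleftrightarrow>
     a ` {..<r} \<subseteq> carrier G \<and> b ` {..<s} \<subseteq> carrier G \<and>
     is_partition G (Inl ` {..<r} \<union> Inr ` {..<s}) (case_sum A B) \<and>
     is_partition G {..<r} (\<lambda>i. a i <#\<^bsub>G\<^esub> A i) \<and>
     is_partition G {..<s} (\<lambda>j. b j <#\<^bsub>G\<^esub> B j)"

definition tarski_number :: "('a, 'b) monoid_scheme \<Rightarrow> enat" where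
  "tarski_number G =
     Inf {enat (r + s) | r s. \<exists>A a B b. complete_paradoxical G r s A a B b}"

end

theory Submission
  imports Defs
begin


lemma paradox_from_labels:
  fixes G (structure)
  assumes grp: "group G" and fin: "finite (lab ` carrier G)"
    and trc: "\<And>l. l \<in> lab ` carrier G \<Longrightarrow> tr l \<in> carrier G"
    and bij: "bij_betw (\<lambda>x. (tr (lab x) \<otimes> x, side (lab x))) (carrier G) (carrier G \<times> (UNIV::bool set))"
  shows "tarski_number G \<le> enat (card (lab ` carrier G))"
proof -
  interpret group G by (rule grp)
  define LA where "LA = {l\<in>lab ` carrier G. \<not> side l}"
  define LB where "LB = {l\<in>lab ` carrier G. side l}"
  have fA: "finite LA" "finite LB" using fin unfolding LA_def LB_def by auto
  obtain fa where fa: "bij_betw fa {..<card LA} LA"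
    using ex_bij_betw_nat_finite[OF fA(1)] by (auto simp: atLeast0LessThan)
  obtain fb where fb: "bij_betw fb {..<card LB} LB"
    using ex_bij_betw_nat_finite[OF fA(2)] by (auto simp: atLeast0LessThan)
  define A where "A i = {x\<in>carrier G. lab x = fa i}" for i
  define B where "B i = {x\<in>carrier G. lab x = fb i}" for i
  define a where "a i = tr (fa i)" for i
  define b where "b i = tr (fb i)" for i
  let ?\<Phi> = "\<lambda>x. (tr (lab x) \<otimes> x, side (lab x))"
  have inj: "x = y" if "x \<in> carrier G" "y \<in> carrier G" "?\<Phi> x = ?\<Phi> y" for x y
    using bij that unfolding bij_betw_def inj_on_def by blast
  have surj: "\<exists>x\<in>carrier G. ?\<Phi> x = (y, e)" if "y \<in> carrier G" for y e
  proof -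
    have "(y, e) \<in> ?\<Phi> ` carrier G" using bij that unfolding bij_betw_def by auto
    then show ?thesis by force
  qed
  have faI: "fa i \<in> LA" if "i < card LA" for i using fa that unfolding bij_betw_def by auto
  have fbI: "fb i \<in> LB" if "i < card LB" for i using fb that unfolding bij_betw_def by auto
  have faj: "i = i'" if "i < card LA" "i' < card LA" "fa i = fa i'" for i i'
    using fa that unfolding bij_betw_def inj_on_def by auto
  have fbj: "i = i'" if "i < card LB" "i' < card LB" "fb i = fb i'" for i i'
    using fb that unfolding bij_betw_def inj_on_def by auto
  have fas: "\<exists>i<card LA. fa i = l" if "l \<in> LA" for l
    using fa that unfolding bij_betw_def by force
  have fbs: "\<exists>i<card LB. fb i = l" if "l \<in> LB" for l
    using fb that unfolding bij_betw_def by force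
  have cp: "complete_paradoxical G (card LA) (card LB) A a B b"
    unfolding complete_paradoxical_def
  proof (intro conjI)
    show "a ` {..<card LA} \<subseteq> carrier G"
      using faI trc unfolding a_def LA_def by auto
    show "b ` {..<card LB} \<subseteq> carrier G"
      using fbI trc unfolding b_def LB_def by auto
    show "is_partition G (Inl ` {..<card LA} \<union> Inr ` {..<card LB}) (case_sum A B)"
      unfolding is_partition_def
    proof (intro conjI ballI impI)
      fix k assume k: "k \<in> Inl ` {..<card LA} \<union> Inr ` {..<card LB}"
      show "case_sum A B k \<noteq> {}"
        using k faI fbI unfolding A_def B_def LA_def LB_def by fastforce
    next
      fix k assume k: "k \<in> Inl ` {..<card LA} \<union> Inr ` {..<card LB}"
      show "case_sum A B k \<subseteq> carrier G"
        using k unfolding A_def B_def by (auto split: sum.splits)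
    next
      fix k k' assume k: "k \<in> Inl ` {..<card LA} \<union> Inr ` {..<card LB}"
        and k': "k' \<in> Inl ` {..<card LA} \<union> Inr ` {..<card LB}" and ne: "k \<noteq> k'"
      show "case_sum A B k \<inter> case_sum A B k' = {}"
        using k k' ne faI fbI faj fbj unfolding A_def B_def LA_def LB_def by fastforce
    next
      show "(\<Union>k\<in>Inl ` {..<card LA} \<union> Inr ` {..<card LB}. case_sum A B k) = carrier G"
      proof
        show "(\<Union>k\<in>Inl ` {..<card LA} \<union> Inr ` {..<card LB}. case_sum A B k) \<subseteq> carrier G"
          unfolding A_def B_def by auto
        show "carrier G \<subseteq> (\<Union>k\<in>Inl ` {..<card LA} \<union> Inr ` {..<card LB}. case_sum A B k)"
        proof
          fix x assume x: "x \<in> carrier G"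
          show "x \<in> (\<Union>k\<in>Inl ` {..<card LA} \<union> Inr ` {..<card LB}. case_sum A B k)"
          proof (cases "side (lab x)")
            case True
            then have "lab x \<in> LB" using x unfolding LB_def by auto
            then obtain i where "i < card LB" "fb i = lab x" using fbs by blast
            then show ?thesis using x unfolding B_def by (intro UN_I[of "Inr i"]) auto
          next
            case False
            then have "lab x \<in> LA" using x unfolding LA_def by auto
            then obtain i where "i < card LA" "fa i = lab x" using fas by blast
            then show ?thesis using x unfolding A_def by (intro UN_I[of "Inl i"]) auto
          qed
        qed
      qed
    qed
    show "is_partition G {..<card LA} (\<lambda>i. a i <# A i)"
      unfolding is_partition_def
    proof (intro conjI ballI impI)
      fix i assume i: "i \<in> {..<card LA}"
      then have "fa i \<in> lab ` carrier G" using faI unfolding LA_def by auto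
      then show "a i <# A i \<noteq> {}"
        using trc unfolding a_def A_def l_coset_def by auto
    next
      fix i assume i: "i \<in> {..<card LA}"
      then have "fa i \<in> lab ` carrier G" using faI unfolding LA_def by auto
      then show "a i <# A i \<subseteq> carrier G"
        using trc unfolding a_def A_def l_coset_def by auto
    next
      fix i i' assume i: "i \<in> {..<card LA}" and i': "i' \<in> {..<card LA}" and ne: "i \<noteq> i'"
      show "(a i <# A i) \<inter> (a i' <# A i') = {}"
      proof (rule ccontr)
        assume "(a i <# A i) \<inter> (a i' <# A i') \<noteq> {}"
        then obtain x x' where x: "x \<in> A i" and x': "x' \<in> A i'" and eq: "a i \<otimes> x = a i' \<otimes> x'"
          unfolding l_coset_def by auto
        have s1: "\<not> side (fa i)" "\<not> side (fa i')" using faI i i' unfolding LA_def by auto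
        have "?\<Phi> x = ?\<Phi> x'" using x x' eq s1 unfolding A_def a_def by auto
        then have "x = x'" using inj x x' unfolding A_def by auto
        then have "fa i = fa i'" using x x' unfolding A_def by auto
        then show False using faj i i' ne by auto
      qed
    next
      show "(\<Union>i\<in>{..<card LA}. a i <# A i) = carrier G"
      proof
        show "(\<Union>i\<in>{..<card LA}. a i <# A i) \<subseteq> carrier G"
          using faI trc unfolding a_def A_def l_coset_def LA_def by auto
        show "carrier G \<subseteq> (\<Union>i\<in>{..<card LA}. a i <# A i)"
        proof
          fix y assume y: "y \<in> carrier G"
          obtain x where x: "x \<in> carrier G" "?\<Phi> x = (y, False)" using surj[OF y] by blast
          then have "lab x \<in> LA" unfolding LA_def by auto
          then obtain i where i: "i < card LA" "fa i = lab x" using fas by blast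
          have "y \<in> a i <# A i" using x i unfolding a_def A_def l_coset_def by auto
          then show "y \<in> (\<Union>i\<in>{..<card LA}. a i <# A i)" using i by auto
        qed
      qed
    qed
    show "is_partition G {..<card LB} (\<lambda>i. b i <# B i)"
      unfolding is_partition_def
    proof (intro conjI ballI impI)
      fix i assume i: "i \<in> {..<card LB}"
      then have "fb i \<in> lab ` carrier G" using fbI unfolding LB_def by auto
      then show "b i <# B i \<noteq> {}"
        using trc unfolding b_def B_def l_coset_def by auto
    next
      fix i assume i: "i \<in> {..<card LB}"
      then have "fb i \<in> lab ` carrier G" using fbI unfolding LB_def by auto
      then show "b i <# B i \<subseteq> carrier G"
        using trc unfolding b_def B_def l_coset_def by auto
    next
      fix i i' assume i: "i \<in> {..<card LB}" and i': "i' \<in> {..<card LB}" and ne: "i \<noteq> i'"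
      show "(b i <# B i) \<inter> (b i' <# B i') = {}"
      proof (rule ccontr)
        assume "(b i <# B i) \<inter> (b i' <# B i') \<noteq> {}"
        then obtain x x' where x: "x \<in> B i" and x': "x' \<in> B i'" and eq: "b i \<otimes> x = b i' \<otimes> x'"
          unfolding l_coset_def by auto
        have s1: "side (fb i)" "side (fb i')" using fbI i i' unfolding LB_def by auto
        have "?\<Phi> x = ?\<Phi> x'" using x x' eq s1 unfolding B_def b_def by auto
        then have "x = x'" using inj x x' unfolding B_def by auto
        then have "fb i = fb i'" using x x' unfolding B_def by auto
        then show False using fbj i i' ne by auto
      qed
    next
      show "(\<Union>i\<in>{..<card LB}. b i <# B i) = carrier G"
      proof
        show "(\<Union>i\<in>{..<card LB}. b i <# B i) \<subseteq> carrier G"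
          using fbI trc unfolding b_def B_def l_coset_def LB_def by auto
        show "carrier G \<subseteq> (\<Union>i\<in>{..<card LB}. b i <# B i)"
        proof
          fix y assume y: "y \<in> carrier G"
          obtain x where x: "x \<in> carrier G" "?\<Phi> x = (y, True)" using surj[OF y] by blast
          then have "lab x \<in> LB" unfolding LB_def by auto
          then obtain i where i: "i < card LB" "fb i = lab x" using fbs by blast
          have "y \<in> b i <# B i" using x i unfolding b_def B_def l_coset_def by auto
          then show "y \<in> (\<Union>i\<in>{..<card LB}. b i <# B i)" using i by auto
        qed
      qed
    qed
  qed
  have "tarski_number G \<le> enat (card LA + card LB)"
    unfolding tarski_number_def using cp by (intro Inf_lower) blast
  moreover have "card LA + card LB = card (lab ` carrier G)"
  proof -
    have "lab ` carrier G = LA \<union> LB" "LA \<inter> LB = {}" unfolding LA_def LB_def by auto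
    then show ?thesis using card_Un_disjoint[OF fA] by simp
  qed
  ultimately show ?thesis by simp
qed




locale tok = group G for G (structure) +
  fixes p :: nat and X Y :: "nat \<Rightarrow> 'a set" and h :: "nat \<Rightarrow> 'a" and W :: "nat \<Rightarrow> 'a \<Rightarrow> int"
  assumes Xc: "r < p \<Longrightarrow> X r \<subseteq> carrier G"
    and Yc: "r < p \<Longrightarrow> Y r \<subseteq> carrier G"
    and hc: "r < p \<Longrightarrow> h r \<in> carrier G"
    and hXY: "r < p \<Longrightarrow> x \<in> X r \<Longrightarrow> h r \<otimes> x \<in> Y r"
    and hYX: "r < p \<Longrightarrow> y \<in> Y r \<Longrightarrow> inv (h r) \<otimes> y \<in> X r"
    and W0: "x \<in> carrier G \<Longrightarrow> W 0 x = 1"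
    and WS: "r < p \<Longrightarrow> x \<in> carrier G \<Longrightarrow>
       W (Suc r) x = W r x - (if x \<in> X r then 1 else 0) + (if x \<in> Y r then 1 else 0)"
    and WX: "r < p \<Longrightarrow> x \<in> X r \<Longrightarrow> 1 \<le> W r x"
    and Wp: "x \<in> carrier G \<Longrightarrow> W p x = 2"
    and p1: "1 \<le> p"
begin

lemma Wnn: "r \<le> p \<Longrightarrow> x \<in> carrier G \<Longrightarrow> 0 \<le> W r x"
proof (induction r)
  case 0 then show ?case using W0 by simp
next
  case (Suc r)
  then have r: "r < p" by simp
  show ?case using Suc.IH[OF less_imp_le[OF r] Suc.prems(2)] WS[OF r Suc.prems(2)] WX[OF r, of x]
    by (auto split: if_splits)
qed

definition step :: "nat \<Rightarrow> 'a \<times> int \<Rightarrow> 'a \<times> int" where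
  "step r = (\<lambda>(y, l). if y \<in> X r \<and> l = W r y - 1 then (h r \<otimes> y, W (Suc r) (h r \<otimes> y) - 1) else (y, l))"

definition M :: "nat \<Rightarrow> ('a \<times> int) set" where
  "M r = {(y, l). y \<in> carrier G \<and> 0 \<le> l \<and> l < W r y}"

lemma step_bij:
  assumes r: "r < p"
  shows "bij_betw (step r) (M r) (M (Suc r))"
proof -
  have Xc': "y \<in> carrier G" if "y \<in> X r" for y using Xc[OF r] that by auto
  have Yc': "y \<in> carrier G" if "y \<in> Y r" for y using Yc[OF r] that by auto
  have hc': "h r \<in> carrier G" using hc[OF r] .
  have into: "step r (y, l) \<in> M (Suc r)" if "(y, l) \<in> M r" for y l
  proof (cases "y \<in> X r \<and> l = W r y - 1")
    case True
    let ?z = "h r \<otimes> y"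
    have zY: "?z \<in> Y r" using hXY[OF r] True by auto
    have zc: "?z \<in> carrier G" using Yc' zY .
    have "1 \<le> W (Suc r) ?z"
      using WS[OF r zc] zY WX[OF r, of ?z] Wnn[of r ?z] r zc by (auto split: if_splits)
    then show ?thesis using True zc unfolding step_def M_def by auto
  next
    case False
    then have yc: "y \<in> carrier G" and l: "0 \<le> l" "l < W r y" using that unfolding M_def by auto
    have "l < W (Suc r) y" using WS[OF r yc] False l by (auto split: if_splits)
    then show ?thesis using False yc l unfolding step_def M_def by auto
  qed
  have inj: "inj_on (step r) (M r)"
  proof (rule inj_onI)
    fix a b assume a: "a \<in> M r" and b: "b \<in> M r" and eq: "step r a = step r b"
    obtain y l where a': "a = (y, l)" by (cases a)
    obtain y' l' where b': "b = (y', l')" by (cases b)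
    have yc: "y \<in> carrier G" "y' \<in> carrier G" using a b a' b' unfolding M_def by auto
    have lb: "l < W r y" "l' < W r y'" using a b a' b' unfolding M_def by auto
    show "a = b"
    proof (cases "y \<in> X r \<and> l = W r y - 1"; cases "y' \<in> X r \<and> l' = W r y' - 1")
      assume c1: "y \<in> X r \<and> l = W r y - 1" and c2: "y' \<in> X r \<and> l' = W r y' - 1"
      then have "h r \<otimes> y = h r \<otimes> y'" using eq a' b' unfolding step_def by auto
      then have "y = y'" using hc' yc by simp
      then show ?thesis using a' b' c1 c2 by simp
    next
      assume c1: "y \<in> X r \<and> l = W r y - 1" and c2: "\<not> (y' \<in> X r \<and> l' = W r y' - 1)"
      then have e1: "y' = h r \<otimes> y" and e2: "l' = W (Suc r) (h r \<otimes> y) - 1"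
        using eq a' b' unfolding step_def by auto
      have zY: "y' \<in> Y r" using hXY[OF r] c1 e1 by auto
      have "W (Suc r) y' = W r y' - (if y' \<in> X r then 1 else 0) + 1"
        using WS[OF r yc(2)] zY by simp
      then show ?thesis using c2 e1 e2 lb by (auto split: if_splits)
    next
      assume c1: "\<not> (y \<in> X r \<and> l = W r y - 1)" and c2: "y' \<in> X r \<and> l' = W r y' - 1"
      then have e1: "y = h r \<otimes> y'" and e2: "l = W (Suc r) (h r \<otimes> y') - 1"
        using eq a' b' unfolding step_def by auto
      have zY: "y \<in> Y r" using hXY[OF r] c2 e1 by auto
      have "W (Suc r) y = W r y - (if y \<in> X r then 1 else 0) + 1"
        using WS[OF r yc(1)] zY by simp
      then show ?thesis using c1 e1 e2 lb by (auto split: if_splits)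
    next
      assume c1: "\<not> (y \<in> X r \<and> l = W r y - 1)" and c2: "\<not> (y' \<in> X r \<and> l' = W r y' - 1)"
      then show ?thesis using eq a' b' unfolding step_def by auto
    qed
  qed
  have onto: "M (Suc r) \<subseteq> step r ` M r"
  proof
    fix c assume c: "c \<in> M (Suc r)"
    obtain z l where c': "c = (z, l)" by (cases c)
    have zc: "z \<in> carrier G" and l: "0 \<le> l" "l < W (Suc r) z" using c c' unfolding M_def by auto
    show "c \<in> step r ` M r"
    proof (cases "z \<in> Y r \<and> l = W (Suc r) z - 1")
      case True
      let ?y = "inv (h r) \<otimes> z"
      have yX: "?y \<in> X r" using hYX[OF r] True by auto
      have yc: "?y \<in> carrier G" using Xc' yX .
      have hy: "h r \<otimes> ?y = z" using hc' zc by (simp add: m_assoc[symmetric])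
      have "1 \<le> W r ?y" using WX[OF r yX] .
      then have "(?y, W r ?y - 1) \<in> M r" using yc unfolding M_def by auto
      moreover have "step r (?y, W r ?y - 1) = c" using yX hy True c' unfolding step_def by auto
      ultimately show ?thesis by force
    next
      case False
      have "l < W r z \<and> \<not> (z \<in> X r \<and> l = W r z - 1)"
        using WS[OF r zc] False l by (auto split: if_splits)
      then have "(z, l) \<in> M r" "step r (z, l) = c" using zc l c' unfolding M_def step_def by auto
      then show ?thesis by force
    qed
  qed
  show ?thesis unfolding bij_betw_def using inj into onto by auto
qed

primrec pos :: "nat \<Rightarrow> 'a \<Rightarrow> 'a \<times> int" where
  "pos 0 x = (x, 0)"
| "pos (Suc r) x = step r (pos r x)"

lemma pos_bij: "r \<le> p \<Longrightarrow> bij_betw (pos r) (carrier G) (M r)"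
proof (induction r)
  case 0
  have "M 0 = (\<lambda>x. (x, 0)) ` carrier G" unfolding M_def using W0 by auto
  moreover have "inj_on (\<lambda>x. (x, 0::int)) (carrier G)" by (auto simp: inj_on_def)
  moreover have "pos 0 = (\<lambda>x. (x, 0))" by (rule ext) simp
  ultimately show ?case unfolding bij_betw_def by simp
next
  case (Suc r)
  have "bij_betw (step r \<circ> pos r) (carrier G) (M (Suc r))"
    using bij_betw_trans[OF Suc.IH step_bij] Suc.prems by simp
  then show ?case by (simp add: comp_def)
qed

definition moved :: "nat \<Rightarrow> 'a \<Rightarrow> bool" where
  "moved r x = (fst (pos r x) \<in> X r \<and> snd (pos r x) = W r (fst (pos r x)) - 1)"

definition path :: "nat \<Rightarrow> 'a \<Rightarrow> nat set" where
  "path r x = {s. s < r \<and> moved s x}"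

primrec F :: "nat \<Rightarrow> nat set \<Rightarrow> 'a" where
  "F 0 S = \<one>"
| "F (Suc r) S = (if r \<in> S then h r \<otimes> F r S else F r S)"

lemma F_carrier: "r \<le> p \<Longrightarrow> F r S \<in> carrier G"
  by (induction r) (auto intro!: m_closed hc)

lemma F_cong: "(\<And>s. s < r \<Longrightarrow> s \<in> S \<longleftrightarrow> s \<in> S') \<Longrightarrow> F r S = F r S'"
  by (induction r) auto

lemma pos_step: "pos (Suc r) x = (if moved r x then (h r \<otimes> fst (pos r x), W (Suc r) (h r \<otimes> fst (pos r x)) - 1) else pos r x)"
  unfolding moved_def by (simp add: step_def split: prod.splits)

declare pos.simps(2)[simp del]

lemma path_Suc: "path (Suc r) x = (if moved r x then insert r (path r x) else path r x)"
  unfolding path_def by (auto simp: less_Suc_eq)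

lemma pos_fst: "r \<le> p \<Longrightarrow> x \<in> carrier G \<Longrightarrow> fst (pos r x) = F r (path r x) \<otimes> x"
proof (induction r)
  case 0 then show ?case by (simp add: path_def)
next
  case (Suc r)
  have IH: "fst (pos r x) = F r (path r x) \<otimes> x" using Suc by simp
  have FF: "F r (path (Suc r) x) = F r (path r x)"
    by (rule F_cong) (auto simp: path_def)
  have Fc: "F r (path r x) \<in> carrier G" using F_carrier Suc.prems by simp
  have hrc: "h r \<in> carrier G" using hc Suc.prems by simp
  show ?case
  proof (cases "moved r x")
    case True
    have "r \<in> path (Suc r) x" using True by (simp add: path_def)
    then show ?thesis using True IH FF Fc hrc Suc.prems
      by (simp add: pos_step m_assoc)
  next
    case False
    have "r \<notin> path (Suc r) x" using False by (simp add: path_def)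
    then show ?thesis using False IH FF by (simp add: pos_step)
  qed
qed

lemma level0: "path r x = {} \<Longrightarrow> snd (pos r x) = 0"
proof (induction r)
  case 0 then show ?case by simp
next
  case (Suc r)
  then have "\<not> moved r x" "path r x = {}" by (auto simp: path_Suc split: if_splits)
  then show ?case using Suc.IH by (simp add: pos_step)
qed

lemma levelLast:
  assumes x: "x \<in> carrier G" and pp: "p - 1 \<in> path p x"
  shows "snd (pos p x) = 1"
proof -
  define q where "q = p - 1"
  have pq: "p = Suc q" using p1 q_def by simp
  have mv: "moved q x" using pp unfolding path_def q_def by simp
  have qp: "q < p" using pq by simp
  have "fst (pos q x) \<in> X q" using mv unfolding moved_def by simp
  then have "h q \<otimes> fst (pos q x) \<in> carrier G" using hXY[OF qp] Yc[OF qp] by auto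
  then show ?thesis using mv Wp pq by (simp add: pos_step)
qed

lemma path_sub: "path r x \<subseteq> {..<r}" unfolding path_def by auto

lemma tok_bound: "tarski_number G \<le> enat (2 * (2 ^ p - 1))"
proof -
  define lab where "lab x = (path p x, snd (pos p x) = 1)" for x
  define tr where "tr = (\<lambda>(S::nat set, e::bool). F p S)"
  define L where "L = (Pow {..<p} \<times> (UNIV::bool set)) - {({}, True), ({p - 1}, False)}"
  have labL: "lab ` carrier G \<subseteq> L"
  proof
    fix c assume "c \<in> lab ` carrier G"
    then obtain x where x: "x \<in> carrier G" "c = lab x" by auto
    have b: "pos p x \<in> M p" using pos_bij[of p] x unfolding bij_betw_def by auto
    have "snd (pos p x) = 0 \<or> snd (pos p x) = 1" using b Wp[of "fst (pos p x)"] unfolding M_def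
      by (cases "pos p x") auto
    moreover have "path p x = {} \<Longrightarrow> snd (pos p x) = 0" by (rule level0)
    moreover have "path p x = {p - 1} \<Longrightarrow> snd (pos p x) = 1" using levelLast[OF x(1)] by auto
    ultimately show "c \<in> L" using x path_sub[of p x] unfolding L_def lab_def by auto
  qed
  have finL: "finite L" unfolding L_def by simp
  have cardL: "card L = 2 * (2 ^ p - 1)"
  proof -
    have sub: "{({}, True), ({p - 1}, False)} \<subseteq> Pow {..<p} \<times> (UNIV::bool set)" using p1 by auto
    have c2: "card {({}::nat set, True), ({p - 1}, False)} = 2" by simp
    have "card (Pow {..<p} \<times> (UNIV::bool set)) = 2 ^ p * 2"
      by (simp add: card_cartesian_product card_Pow)
    then show ?thesis unfolding L_def using card_Diff_subset[OF _ sub] c2 by simp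
  qed
  have "tarski_number G \<le> enat (card (lab ` carrier G))"
  proof (rule paradox_from_labels[where tr = tr and side = snd])
    show "group G" by (rule is_group)
    show "finite (lab ` carrier G)" using finite_subset[OF labL finL] .
    show "tr l \<in> carrier G" if "l \<in> lab ` carrier G" for l
      using F_carrier[of p] that unfolding tr_def by (auto split: prod.splits)
    have eq: "(\<lambda>x. (tr (lab x) \<otimes> x, snd (lab x))) x = (\<lambda>(y, l). (y, l = 1)) (pos p x)"
      if "x \<in> carrier G" for x
      using pos_fst[of p x] that unfolding tr_def lab_def by (cases "pos p x") auto
    have b2: "bij_betw (\<lambda>(y, l). (y, l = (1::int))) (M p) (carrier G \<times> (UNIV::bool set))"
    proof -
      have "M p = (\<lambda>(y, e). (y, if e then 1 else 0)) ` (carrier G \<times> (UNIV::bool set))"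
      proof
        show "M p \<subseteq> (\<lambda>(y, e). (y, if e then 1 else 0)) ` (carrier G \<times> (UNIV::bool set))"
        proof
          fix c assume c: "c \<in> M p"
          obtain y l where c': "c = (y, l)" by (cases c)
          have "y \<in> carrier G" "l = 0 \<or> l = 1" using c c' Wp unfolding M_def by auto
          then show "c \<in> (\<lambda>(y, e). (y, if e then 1 else 0)) ` (carrier G \<times> (UNIV::bool set))"
            using c' by (auto intro: image_eqI[where x = "(y, l = 1)"])
        qed
        show "(\<lambda>(y, e). (y, if e then 1 else 0)) ` (carrier G \<times> (UNIV::bool set)) \<subseteq> M p"
          using Wp unfolding M_def by auto
      qed
      then have Mp: "M p = (\<lambda>(y, e). (y, if e then 1 else 0)) ` (carrier G \<times> (UNIV::bool set))" .
      have "inj_on (\<lambda>(y, l). (y, l = (1::int))) (M p)"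
        unfolding Mp inj_on_def by auto
      moreover have "(\<lambda>(y, l). (y, l = (1::int))) ` M p = carrier G \<times> (UNIV::bool set)"
      proof
        show "(\<lambda>(y, l). (y, l = (1::int))) ` M p \<subseteq> carrier G \<times> (UNIV::bool set)"
          unfolding Mp by auto
        show "carrier G \<times> (UNIV::bool set) \<subseteq> (\<lambda>(y, l). (y, l = (1::int))) ` M p"
        proof
          fix c assume c: "c \<in> carrier G \<times> (UNIV::bool set)"
          obtain a e where c': "c = (a, e)" by (cases c)
          have "(a, if e then 1 else 0) \<in> M p" unfolding Mp using c c'
            by (intro image_eqI[where x = "(a, e)"]) auto
          moreover have "(\<lambda>(y, l). (y, l = (1::int))) (a, if e then 1 else 0) = c" using c' by auto
          ultimately show "c \<in> (\<lambda>(y, l). (y, l = (1::int))) ` M p" by (rule rev_image_eqI[OF _ sym])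
        qed
      qed
      ultimately show ?thesis unfolding bij_betw_def by simp
    qed
    show "bij_betw (\<lambda>x. (tr (lab x) \<otimes> x, snd (lab x))) (carrier G) (carrier G \<times> (UNIV::bool set))"
      using bij_betw_trans[OF pos_bij[of p] b2] eq by (simp add: comp_def cong: bij_betw_cong)
  qed
  also have "\<dots> \<le> enat (card L)" using card_mono[OF finL labL] by simp
  finally show ?thesis using cardL by simp
qed

end




locale cfg = group G for G (structure) +
  fixes gs :: "'a list" and m :: nat and E :: "nat \<Rightarrow> 'a set"
  assumes gs: "set gs \<subseteq> carrier G" and part: "is_partition G {..<m} E"
begin

definition gg :: "nat \<Rightarrow> 'a" where "gg j = (if j = 0 then \<one> else gs ! (j - 1))"

definition blk :: "nat \<Rightarrow> 'a \<Rightarrow> nat" where "blk j x = (THE i. i < m \<and> gg j \<otimes> x \<in> E i)"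

definition conf :: "'a \<Rightarrow> nat list" where "conf x = map (\<lambda>j. blk j x) [0..<Suc (length gs)]"

lemma gg_c: "j \<le> length gs \<Longrightarrow> gg j \<in> carrier G"
  unfolding gg_def using gs by (auto intro!: nth_mem[THEN subsetD[OF gs]])

lemma blk_ex1: "y \<in> carrier G \<Longrightarrow> \<exists>!i. i < m \<and> y \<in> E i"
  using part unfolding is_partition_def by blast

lemma blk_prop:
  assumes "j \<le> length gs" "x \<in> carrier G"
  shows "blk j x < m \<and> gg j \<otimes> x \<in> E (blk j x)"
proof -
  have "gg j \<otimes> x \<in> carrier G" using gg_c assms by auto
  then have "\<exists>!i. i < m \<and> gg j \<otimes> x \<in> E i" by (rule blk_ex1)
  then show ?thesis unfolding blk_def by (rule theI')
qed

lemma blk_iff: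
  assumes "j \<le> length gs" "x \<in> carrier G" "i < m"
  shows "blk j x = i \<longleftrightarrow> gg j \<otimes> x \<in> E i"
proof -
  have y: "gg j \<otimes> x \<in> carrier G" using gg_c assms by auto
  show ?thesis using blk_prop[OF assms(1,2)] blk_ex1[OF y] assms(3) by blast
qed

lemma conf_nth: "j \<le> length gs \<Longrightarrow> conf x ! j = blk j x"
  unfolding conf_def by (simp del: upt_Suc add: nth_map_upt)

lemma conf_len: "length (conf x) = Suc (length gs)" unfolding conf_def by simp

lemma conf_in: "x \<in> carrier G \<Longrightarrow> conf x \<in> configurations G gs m E"
  unfolding configurations_def
proof (intro CollectI conjI ballI bexI[of _ x])
  assume x: "x \<in> carrier G"
  show "length (conf x) = Suc (length gs)" by (rule conf_len)
  show "c < m" if "c \<in> set (conf x)" for c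
    using that blk_prop x unfolding conf_def by auto
  show "x \<in> E (conf x ! 0)" using blk_prop[of 0 x] x conf_nth[of 0 x] by (simp add: gg_def)
  show "\<forall>i<length gs. gs ! i \<otimes> x \<in> E (conf x ! Suc i)"
  proof (intro allI impI)
    fix i assume i: "i < length gs"
    have "gg (Suc i) \<otimes> x \<in> E (blk (Suc i) x)" using blk_prop[of "Suc i" x] x i by simp
    then show "gs ! i \<otimes> x \<in> E (conf x ! Suc i)" using conf_nth[of "Suc i" x] i by (simp add: gg_def)
  qed
qed

lemma Con_eq: "configurations G gs m E = conf ` carrier G"
proof
  show "conf ` carrier G \<subseteq> configurations G gs m E" using conf_in by auto
  show "configurations G gs m E \<subseteq> conf ` carrier G"
  proof
    fix C assume "C \<in> configurations G gs m E"
    then obtain x where len: "length C = Suc (length gs)" and lt: "\<forall>c\<in>set C. c < m"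
      and x: "x \<in> carrier G" and x0: "x \<in> E (C ! 0)"
      and xi: "\<forall>i<length gs. gs ! i \<otimes> x \<in> E (C ! Suc i)"
      unfolding configurations_def by auto
    have "C = conf x"
    proof (rule nth_equalityI)
      show "length C = length (conf x)" using len conf_len by simp
      fix j assume "j < length C"
      then have j: "j \<le> length gs" and cm: "C ! j < m" using len lt by auto
      have "gg j \<otimes> x \<in> E (C ! j)"
      proof (cases j)
        case 0 then show ?thesis using x x0 by (simp add: gg_def)
      next
        case (Suc i) then show ?thesis using xi j by (simp add: gg_def)
      qed
      then show "C ! j = conf x ! j" using blk_iff[OF j x cm] conf_nth[OF j] by simp
    qed
    then show "C \<in> conf ` carrier G" using x by auto
  qed
qed

lemma Con_fin: "finite (configurations G gs m E)"
proof -
  have "configurations G gs m E \<subseteq> {xs. set xs \<subseteq> {..<m} \<and> length xs = Suc (length gs)}"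
    unfolding configurations_def by auto
  then show ?thesis using finite_lists_length_eq[of "{..<m}"] finite_subset by blast
qed

lemma eqA_conf:
  assumes "eqs ! t = (i, j, k)" "i < m" "j \<le> length gs" "x \<in> carrier G"
  shows "eqA eqs t (conf x) = (if gg j \<otimes> x \<in> E i then 1 else 0)"
  using assms blk_iff[OF assms(3,4,2)] conf_nth[OF assms(3)] unfolding eqA_def by simp

lemma eqB_conf:
  assumes "eqs ! t = (i, j, k)" "i < m" "k \<le> length gs" "x \<in> carrier G"
  shows "eqB eqs t (conf x) = (if gg k \<otimes> x \<in> E i then 1 else 0)"
  using assms blk_iff[OF assms(3,4,2)] conf_nth[OF assms(3)] unfolding eqB_def by simp

end




lemma card_le2_eq:
  assumes "finite U" "card U \<le> 2" "K \<subseteq> U" "L \<subseteq> U"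
    and "K = {} \<longleftrightarrow> L = {}" and "K = U \<longleftrightarrow> L = U"
  shows "card K = card L"
proof (cases "K = {} \<or> K = U")
  case True then show ?thesis using assms by auto
next
  case False
  then have "L \<noteq> {}" "L \<noteq> U" using assms by auto
  then have "0 < card L" "card L < card U" using assms False
    by (auto intro!: psubset_card_mono simp: card_gt_0_iff intro: finite_subset)
  moreover have "0 < card K" "card K < card U" using assms False
    by (auto intro!: psubset_card_mono simp: card_gt_0_iff intro: finite_subset)
  ultimately show ?thesis using assms(2) by linarith
qed

lemma sum_ind_card:
  assumes "finite U" "\<And>C. C \<in> U \<Longrightarrow> f C = 0 \<or> f C = (1::int)"
  shows "(\<Sum>C\<in>U. f C) = int (card {C\<in>U. f C = 1})"
proof -
  have "(\<Sum>C\<in>U. f C) = (\<Sum>C\<in>U. if f C = 1 then 1 else 0)"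
    using assms(2) by (intro sum.cong) auto
  also have "\<dots> = int (card {C\<in>U. f C = 1})"
    using assms(1) by (simp add: sum.If_cases Int_def)
  finally show ?thesis .
qed

theorem corollary3p2:
  fixes G (structure)
    and gs :: "'a list" and m :: nat and E :: "nat \<Rightarrow> 'a set"
    and eqs :: "(nat \<times> nat \<times> nat) list"
  assumes "group G"
    and "set gs \<subseteq> carrier G"
    and "is_partition G {..<m} E"
    and "\<forall>(i, j, k)\<in>set eqs. i < m \<and> j \<le> length gs \<and> k \<le> length gs"
    and "normal_system (length eqs) (configurations G gs m E) (eqA eqs) (eqB eqs)"
    and "\<forall>C\<in>configurations G gs m E. (\<Sum>t<length eqs. eqB eqs t C - eqA eqs t C) = 1"
  shows "tarski_number G
           \<le> enat ((card (configurations G gs m E) - 1) * (2 ^ length eqs - 1))"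
proof -
  interpret cfg G gs m E using assms(1,2,3) by (simp add: cfg_def cfg_axioms_def)
  define p where "p = length eqs"
  define Con where "Con = configurations G gs m E"
  obtain \<sigma> where \<sigma>: "bij_betw \<sigma> {..<p} {..<p}"
    and nc: "\<forall>r<p. \<forall>C\<in>Con. (\<Sum>s\<le>r. eqB eqs (\<sigma> s) C - eqA eqs (\<sigma> s) C) - eqA eqs (\<sigma> (Suc r mod p)) C \<ge> -1"
    using assms(5) unfolding normal_system_def p_def Con_def by blast
  have \<sigma>lt: "\<sigma> r < p" if "r < p" for r using \<sigma> that unfolding bij_betw_def by auto
  define I where "I t = fst (eqs ! t)" for t
  define J where "J t = fst (snd (eqs ! t))" for t
  define K where "K t = snd (snd (eqs ! t))" for t
  have eqt: "eqs ! t = (I t, J t, K t)" for t unfolding I_def J_def K_def by simp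
  have ok: "I t < m \<and> J t \<le> length gs \<and> K t \<le> length gs" if "t < p" for t
    using assms(4) nth_mem[of t eqs] that eqt[of t] unfolding p_def by fastforce
  have Av: "eqA eqs t (conf x) = (if gg (J t) \<otimes> x \<in> E (I t) then 1 else 0)"
    if "t < p" "x \<in> carrier G" for t x using eqA_conf[OF eqt] ok that by simp
  have Bv: "eqB eqs t (conf x) = (if gg (K t) \<otimes> x \<in> E (I t) then 1 else 0)"
    if "t < p" "x \<in> carrier G" for t x using eqB_conf[OF eqt] ok that by simp
  have Jc: "gg (J t) \<in> carrier G" and Kc: "gg (K t) \<in> carrier G" if "t < p" for t
    using gg_c ok that by auto
  have conf_Con: "conf x \<in> Con" if "x \<in> carrier G" for x using conf_in that Con_def by simp
  define X where "X r = {x\<in>carrier G. gg (J (\<sigma> r)) \<otimes> x \<in> E (I (\<sigma> r))}" for r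
  define Y where "Y r = {x\<in>carrier G. gg (K (\<sigma> r)) \<otimes> x \<in> E (I (\<sigma> r))}" for r
  define h where "h r = inv (gg (K (\<sigma> r))) \<otimes> gg (J (\<sigma> r))" for r
  define W where "W r x = 1 + (\<Sum>s<r. eqB eqs (\<sigma> s) (conf x) - eqA eqs (\<sigma> s) (conf x))" for r x
  have conj1: "a \<otimes> ((inv a \<otimes> b) \<otimes> x) = b \<otimes> x"
    if "a \<in> carrier G" "b \<in> carrier G" "x \<in> carrier G" for a b x
    using that by (simp add: m_assoc[symmetric])
  have conj2: "b \<otimes> (inv (inv a \<otimes> b) \<otimes> x) = a \<otimes> x"
    if "a \<in> carrier G" "b \<in> carrier G" "x \<in> carrier G" for a b x
    using that by (simp add: m_assoc[symmetric] inv_mult_group)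
  interpret tok G p X Y h W
  proof
    fix r assume r: "r < p"
    show "X r \<subseteq> carrier G" "Y r \<subseteq> carrier G" unfolding X_def Y_def by auto
    show "h r \<in> carrier G" unfolding h_def using Jc Kc \<sigma>lt r by auto
  next
    fix r x assume r: "r < p" and x: "x \<in> X r"
    show "h r \<otimes> x \<in> Y r" using x conj1 Jc Kc \<sigma>lt[OF r] unfolding X_def Y_def h_def by auto
  next
    fix r y assume r: "r < p" and y: "y \<in> Y r"
    show "inv (h r) \<otimes> y \<in> X r" using y conj2 Jc Kc \<sigma>lt[OF r] unfolding X_def Y_def h_def by auto
  next
    fix x assume "x \<in> carrier G" then show "W 0 x = 1" unfolding W_def by simp
  next
    fix r x assume r: "r < p" and x: "x \<in> carrier G"
    show "W (Suc r) x = W r x - (if x \<in> X r then 1 else 0) + (if x \<in> Y r then 1 else 0)"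
      unfolding W_def X_def Y_def using Av[OF \<sigma>lt[OF r] x] Bv[OF \<sigma>lt[OF r] x] x by simp
  next
    fix r x assume r: "r < p" and x: "x \<in> X r"
    have xc: "x \<in> carrier G" using x X_def by auto
    show "1 \<le> W r x"
    proof (cases r)
      case 0 then show ?thesis unfolding W_def by simp
    next
      case (Suc q)
      have "q < p" using r Suc by simp
      then have "(\<Sum>s\<le>q. eqB eqs (\<sigma> s) (conf x) - eqA eqs (\<sigma> s) (conf x)) - eqA eqs (\<sigma> (Suc q mod p)) (conf x) \<ge> -1"
        using nc conf_Con[OF xc] by blast
      moreover have "Suc q mod p = r" using r Suc by simp
      moreover have "eqA eqs (\<sigma> r) (conf x) = 1" using Av[OF \<sigma>lt[OF r] xc] x unfolding X_def by simp
      ultimately show ?thesis unfolding W_def Suc by (simp add: lessThan_Suc_atMost)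
    qed
  next
    fix x assume x: "x \<in> carrier G"
    have "(\<Sum>s<p. eqB eqs (\<sigma> s) (conf x) - eqA eqs (\<sigma> s) (conf x))
        = (\<Sum>t<p. eqB eqs t (conf x) - eqA eqs t (conf x))"
      by (rule sum.reindex_bij_betw[OF \<sigma>])
    also have "\<dots> = 1" using assms(6) conf_Con[OF x] unfolding Con_def p_def by blast
    finally show "W p x = 2" unfolding W_def by simp
  next
    have "conf \<one> \<in> Con" using conf_Con by simp
    then have "(\<Sum>t<p. eqB eqs t (conf \<one>) - eqA eqs t (conf \<one>)) = 1"
      using assms(6) unfolding Con_def p_def by blast
    then show "1 \<le> p" by (cases p) auto
  qed
  have tb: "tarski_number G \<le> enat (2 * (2 ^ p - 1))" by (rule tok_bound)
  have finCon: "finite Con" using Con_fin Con_def by simp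
  have card3: "3 \<le> card Con"
  proof (rule ccontr)
    assume "\<not> 3 \<le> card Con"
    then have c2: "card Con \<le> 2" by simp
    have Cc: "Con = conf ` carrier G" using Con_eq Con_def by simp
    have eqcard: "card {C\<in>Con. eqA eqs t C = 1} = card {C\<in>Con. eqB eqs t C = 1}" if t: "t < p" for t
    proof (rule card_le2_eq[OF finCon c2])
      let ?KA = "{C\<in>Con. eqA eqs t C = 1}" and ?KB = "{C\<in>Con. eqB eqs t C = 1}"
      have memA: "C \<in> ?KA \<longleftrightarrow> (\<exists>x\<in>carrier G. C = conf x \<and> gg (J t) \<otimes> x \<in> E (I t))" for C
        using Av[OF t] Cc by (auto split: if_splits)
      have memB: "C \<in> ?KB \<longleftrightarrow> (\<exists>x\<in>carrier G. C = conf x \<and> gg (K t) \<otimes> x \<in> E (I t))" for C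
        using Bv[OF t] Cc by (auto split: if_splits)
      have ex: "(\<exists>x\<in>carrier G. a \<otimes> x \<in> S) \<Longrightarrow> (\<exists>y\<in>carrier G. b \<otimes> y \<in> S)"
        if "a \<in> carrier G" "b \<in> carrier G" for a b S
      proof -
        assume "\<exists>x\<in>carrier G. a \<otimes> x \<in> S"
        then obtain x where x: "x \<in> carrier G" "a \<otimes> x \<in> S" by blast
        have "b \<otimes> ((inv b \<otimes> a) \<otimes> x) = a \<otimes> x" using conj1 that x by simp
        then show ?thesis using x that by (intro bexI[of _ "(inv b \<otimes> a) \<otimes> x"]) auto
      qed
      have al: "(\<forall>x\<in>carrier G. a \<otimes> x \<in> S) \<Longrightarrow> (\<forall>y\<in>carrier G. b \<otimes> y \<in> S)"
        if "a \<in> carrier G" "b \<in> carrier G" for a b S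
      proof -
        assume A: "\<forall>x\<in>carrier G. a \<otimes> x \<in> S"
        show ?thesis
        proof
          fix y assume y: "y \<in> carrier G"
          have "a \<otimes> ((inv a \<otimes> b) \<otimes> y) = b \<otimes> y" using conj1 that y by simp
          then show "b \<otimes> y \<in> S" using A y that by (metis inv_closed m_closed)
        qed
      qed
      show "?KA \<subseteq> Con" "?KB \<subseteq> Con" by auto
      have "?KA = {} \<longleftrightarrow> \<not> (\<exists>x\<in>carrier G. gg (J t) \<otimes> x \<in> E (I t))" using memA by blast
      moreover have "?KB = {} \<longleftrightarrow> \<not> (\<exists>x\<in>carrier G. gg (K t) \<otimes> x \<in> E (I t))" using memB by blast
      ultimately show "?KA = {} \<longleftrightarrow> ?KB = {}" using ex Jc[OF t] Kc[OF t] by meson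
      have "?KA = Con \<longleftrightarrow> (\<forall>x\<in>carrier G. gg (J t) \<otimes> x \<in> E (I t))"
      proof
        assume "?KA = Con"
        then show "\<forall>x\<in>carrier G. gg (J t) \<otimes> x \<in> E (I t)"
          using Av[OF t] conf_Con by (metis (mono_tags, lifting) mem_Collect_eq zero_neq_one)
      next
        assume "\<forall>x\<in>carrier G. gg (J t) \<otimes> x \<in> E (I t)"
        then show "?KA = Con" using memA Cc by auto
      qed
      moreover have "?KB = Con \<longleftrightarrow> (\<forall>x\<in>carrier G. gg (K t) \<otimes> x \<in> E (I t))"
      proof
        assume "?KB = Con"
        then show "\<forall>x\<in>carrier G. gg (K t) \<otimes> x \<in> E (I t)"
          using Bv[OF t] conf_Con by (metis (mono_tags, lifting) mem_Collect_eq zero_neq_one)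
      next
        assume "\<forall>x\<in>carrier G. gg (K t) \<otimes> x \<in> E (I t)"
        then show "?KB = Con" using memB Cc by auto
      qed
      ultimately show "?KA = Con \<longleftrightarrow> ?KB = Con" using al Jc[OF t] Kc[OF t] by meson
    qed
    have A01: "eqA eqs t C = 0 \<or> eqA eqs t C = 1" for t C unfolding eqA_def by (auto split: prod.splits)
    have B01: "eqB eqs t C = 0 \<or> eqB eqs t C = 1" for t C unfolding eqB_def by (auto split: prod.splits)
    have "int (card Con) = (\<Sum>C\<in>Con. (\<Sum>t<p. eqB eqs t C - eqA eqs t C))"
      using assms(6) unfolding Con_def p_def by simp
    also have "\<dots> = (\<Sum>t<p. (\<Sum>C\<in>Con. eqB eqs t C) - (\<Sum>C\<in>Con. eqA eqs t C))"
      by (simp add: sum.swap[of _ Con] sum_subtractf)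
    also have "\<dots> = 0"
      using eqcard sum_ind_card[OF finCon A01] sum_ind_card[OF finCon B01] by simp
    finally have "card Con = 0" by simp
    moreover have "Con \<noteq> {}" using conf_Con[of \<one>] by auto
    ultimately show False using finCon by simp
  qed
  have "2 * (2 ^ p - 1) \<le> (card Con - 1) * (2 ^ p - 1)"
    using card3 by (intro mult_le_mono1) simp
  then show ?thesis using tb unfolding Con_def p_def by (meson enat_ord_simps(1) order_trans)
qed


end
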